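(* Let $F$ be a face of $V_O$ and let $\lambda\ne\mu$ be two elements of $\Xi_1$ such that $F\subseteq H_\lambda\cap H_\mu$. Then $\mathrm{supp}(\lambda)$ and $\mathrm{supp}(\mu)$ are consistent in their orientations: there is no oriented edge $e\in\mathbb E$ with $e\in\mathrm{supp}(\lambda)$ and $\bar e\in\mathrm{supp}(\mu)$.
   Context: $G=(V,E)$ is a finite connected graph, possibly with parallel edges and loops; $\mathbb E$ is the set of oriented edges ($e$ and its reverse $\bar e$). Real $1$-chains $x:\mathbb E\to\mathbb R$ satisfy $x_{\bar e}=-x_e$; $\langle x,y\rangle=\sum_{e\in E}x_ey_e$, $q(x)=\langle x,x\rangle$. A flow satisfies $\sum_{e\text{ with tail }v}x_e=0$ at every vertex $v$; $H$ is the space of real flows and $\Lambda$ the lattice of integer flows. $V_O=\{x\in H: q(x)\le q(x-\mu)\ \forall\mu\in\Lambda\}$ is the Voronoi cell of the origin. For a flow $x$, $\mathrm{supp}(x)=\{e\in\mathbb E: x_e>0\}$. A circuit is an orientation of a cycle as a directed cycle; $x^C_e=1$ if $e\in C$, $-1$ if $\bar e\in C$, $0$ otherwise. $\Xi_1=\{x^C: C\text{ a circuit}\}$. For $\lambda\in\Xi_1$, $H_\lambda=\{x\in H: 2\langle x,\lambda\rangle=q(\lambda)\}$. *)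

theory Defs
  imports "HOL-Analysis.Analysis"
begin

text \<open>A finite connected multigraph (parallel edges and loops allowed).
  Vertices are the elements of a finite type 'v, edges the elements of a finite
  type 'e; each edge e carries a reference orientation with tail src e and head tgt e.
  An oriented edge is a pair (e, d): (e, True) is e with its reference orientation,
  (e, False) is its reverse.  Real 1-chains x with x(rev e) = - x e are
  represented by their values on reference orientations: vectors in real^'e.\<close>

type_synonym 'e oedge = "'e \<times> bool"

definition orev :: "'e oedge \<Rightarrow> 'e oedge" where
  "orev oe = (fst oe, \<not> snd oe)"

definition otail :: "('e \<Rightarrow> 'v) \<Rightarrow> ('e \<Rightarrow> 'v) \<Rightarrow> 'e oedge \<Rightarrow> 'v" where
  "otail src tgt oe = (if snd oe then src (fst oe) else tgt (fst oe))"

definition ohead :: "('e \<Rightarrow> 'v) \<Rightarrow> ('e \<Rightarrow> 'v) \<Rightarrow> 'e oedge \<Rightarrow> 'v" where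
  "ohead src tgt oe = (if snd oe then tgt (fst oe) else src (fst oe))"

definition oval :: "real ^ 'e \<Rightarrow> 'e oedge \<Rightarrow> real" where
  "oval x oe = (if snd oe then x $ fst oe else - (x $ fst oe))"

definition connected_graph :: "('e::finite \<Rightarrow> 'v::finite) \<Rightarrow> ('e \<Rightarrow> 'v) \<Rightarrow> bool" where
  "connected_graph src tgt \<longleftrightarrow>
     (\<forall>u v. (u, v) \<in> ({(src e, tgt e) | e. True} \<union> {(tgt e, src e) | e. True})\<^sup>*)"

definition qf :: "real ^ 'e::finite \<Rightarrow> real" where
  "qf x = x \<bullet> x"

definition flows :: "('e::finite \<Rightarrow> 'v) \<Rightarrow> ('e \<Rightarrow> 'v) \<Rightarrow> (real ^ 'e) set" where
  "flows src tgt = {x. \<forall>v. (\<Sum>oe \<in> {oe. otail src tgt oe = v}. oval x oe) = 0}"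

definition int_flows :: "('e::finite \<Rightarrow> 'v) \<Rightarrow> ('e \<Rightarrow> 'v) \<Rightarrow> (real ^ 'e) set" where
  "int_flows src tgt = {x \<in> flows src tgt. \<forall>e. x $ e \<in> \<int>}"

definition voronoi_cell :: "('e::finite \<Rightarrow> 'v) \<Rightarrow> ('e \<Rightarrow> 'v) \<Rightarrow> (real ^ 'e) set" where
  "voronoi_cell src tgt = {x \<in> flows src tgt. \<forall>mu \<in> int_flows src tgt. qf x \<le> qf (x - mu)}"

definition supp :: "real ^ 'e \<Rightarrow> 'e oedge set" where
  "supp x = {oe. oval x oe > 0}"

text \<open>A circuit: a cycle (closed walk without repeated edges or vertices; loops and
  pairs of parallel edges are cycles) oriented as a directed cycle, given as the
  set of its oriented edges.\<close>
definition is_circuit :: "('e \<Rightarrow> 'v) \<Rightarrow> ('e \<Rightarrow> 'v) \<Rightarrow> 'e oedge set \<Rightarrow> bool" where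
  "is_circuit src tgt C \<longleftrightarrow>
     (\<exists>es. es \<noteq> [] \<and> set es = C \<and> distinct (map fst es) \<and>
        distinct (map (otail src tgt) es) \<and>
        (\<forall>i < length es. ohead src tgt (es ! i) = otail src tgt (es ! ((i + 1) mod length es))))"

definition circuit_chain :: "'e oedge set \<Rightarrow> real ^ 'e" where
  "circuit_chain C = (\<chi> e. if (e, True) \<in> C then 1 else if (e, False) \<in> C then -1 else 0)"

definition Xi1 :: "('e::finite \<Rightarrow> 'v) \<Rightarrow> ('e \<Rightarrow> 'v) \<Rightarrow> (real ^ 'e) set" where
  "Xi1 src tgt = {circuit_chain C | C. is_circuit src tgt C}"

definition hyperplane_H :: "('e::finite \<Rightarrow> 'v) \<Rightarrow> ('e \<Rightarrow> 'v) \<Rightarrow> real ^ 'e \<Rightarrow> (real ^ 'e) set" where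
  "hyperplane_H src tgt lam = {x \<in> flows src tgt. 2 * (x \<bullet> lam) = qf lam}"

end

theory Submission
  imports Defs
begin

definition dv :: "('e::finite \<Rightarrow> 'v) \<Rightarrow> ('e \<Rightarrow> 'v) \<Rightarrow> real^'e \<Rightarrow> 'v \<Rightarrow> real" where
  "dv src tgt x v = (\<Sum>e\<in>UNIV. ((if src e = v then 1 else 0) - (if tgt e = v then 1 else 0)) * x$e)"

lemma sum_tail:
  fixes src tgt :: "'e::finite \<Rightarrow> 'v"
  shows "(\<Sum>oe\<in>{oe. otail src tgt oe = v}. oval x oe) = dv src tgt x v"
proof -
  have "(\<Sum>oe\<in>{oe. otail src tgt oe = v}. oval x oe)
      = (\<Sum>oe\<in>(UNIV::('e\<times>bool) set). if otail src tgt oe = v then oval x oe else 0)"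
    by (subst sum.inter_filter[symmetric]) auto
  also have "\<dots> = (\<Sum>e\<in>(UNIV::'e set). \<Sum>b\<in>(UNIV::bool set). if otail src tgt (e,b) = v then oval x (e,b) else 0)"
    by (simp add: UNIV_Times_UNIV[symmetric] sum.cartesian_product del: UNIV_Times_UNIV)
  also have "\<dots> = dv src tgt x v"
    unfolding dv_def by (intro sum.cong) (auto simp: UNIV_bool otail_def oval_def)
  finally show ?thesis .
qed

lemma flows_iff: "x \<in> flows src tgt \<longleftrightarrow> (\<forall>v. dv src tgt x v = 0)"
  by (simp add: flows_def sum_tail)

lemma dv_sum: "dv src tgt (\<Sum>k\<in>K. y k) v = (\<Sum>k\<in>K. dv src tgt (y k) v)"
  unfolding dv_def by (simp add: sum_distrib_left sum.swap[of _ K])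

lemma dv_diff: "dv src tgt (x - y) v = dv src tgt x v - dv src tgt y v"
  unfolding dv_def by (simp add: right_diff_distrib sum_subtractf)

definition uc :: "'e::finite oedge \<Rightarrow> real^'e" where
  "uc a = (\<chi> e. if e = fst a then (if snd a then 1 else -1) else 0)"

lemma dv_uc: "dv src tgt (uc a) v = (if otail src tgt a = v then 1 else 0) - (if ohead src tgt a = v then 1 else 0)"
proof -
  define c where "c e = ((if src e = v then 1 else 0) - (if tgt e = v then 1 else 0)::real)" for e
  define s where "s = (if snd a then 1 else -1::real)"
  have "dv src tgt (uc a) v = (\<Sum>e\<in>UNIV. if e = fst a then c e * s else 0)"
    unfolding dv_def c_def s_def uc_def by (intro sum.cong) auto
  also have "\<dots> = c (fst a) * s" by (simp add: sum.delta')
  finally show ?thesis unfolding c_def s_def otail_def ohead_def by auto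
qed

lemma closed_walk_flow:
  assumes "\<forall>k<p. ohead src tgt (g k) = otail src tgt (g (Suc k))" "g p = g 0"
  shows "(\<Sum>k<p. uc (g k)) \<in> flows src tgt"
  unfolding flows_iff
proof
  fix v
  define T where "T k = (if otail src tgt (g k) = v then 1 else 0::real)" for k
  have "dv src tgt (\<Sum>k<p. uc (g k)) v = (\<Sum>k<p. T k - T (Suc k))"
    unfolding dv_sum dv_uc T_def using assms(1) by (intro sum.cong) auto
  also have "\<dots> = - (\<Sum>k<p. T (Suc k) - T k)" by (simp add: sum_negf[symmetric])
  also have "(\<Sum>k<p. T (Suc k) - T k) = T p - T 0" by (rule sum_lessThan_telescope)
  also have "- (T p - T 0) = 0" using assms(2) by (simp add: T_def)
  finally show "dv src tgt (\<Sum>k<p. uc (g k)) v = 0" .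
qed

lemma chain_eq:
  fixes g :: "nat \<Rightarrow> 'e::finite oedge"
  assumes "inj_on g {..<p}" "\<forall>e. \<not> ((e,True) \<in> g`{..<p} \<and> (e,False) \<in> g`{..<p})"
  shows "(\<Sum>k<p. uc (g k)) = circuit_chain (g`{..<p})"
proof (subst vec_eq_iff, intro allI)
  fix e
  have "(\<Sum>k<p. uc (g k)) $ e = (\<Sum>a\<in>g`{..<p}. uc a $ e)"
    by (simp add: sum.reindex[OF assms(1)])
  also have "\<dots> = (\<Sum>a\<in>g`{..<p}. (if a = (e,True) then 1 else 0) + (if a = (e,False) then -1 else 0))"
  proof (intro sum.cong refl)
    fix a :: "'e oedge" show "uc a $ e = (if a = (e,True) then 1 else 0) + (if a = (e,False) then -1 else 0)"
      by (cases a) (auto simp: uc_def)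
  qed
  also have "\<dots> = (if (e,True) \<in> g`{..<p} then 1 else 0) + (if (e,False) \<in> g`{..<p} then -1 else 0)"
    by (simp add: sum.distrib sum.delta')
  also have "\<dots> = circuit_chain (g`{..<p}) $ e"
    using assms(2) by (auto simp: circuit_chain_def)
  finally show "(\<Sum>k<p. uc (g k)) $ e = circuit_chain (g`{..<p}) $ e" .
qed

lemma circuit_flow:
  assumes "is_circuit src tgt C"
  shows "circuit_chain C \<in> flows src tgt"
proof -
  obtain es where es: "es \<noteq> []" "set es = C" "distinct (map fst es)"
    "\<forall>i < length es. ohead src tgt (es ! i) = otail src tgt (es ! ((i + 1) mod length es))"
    using assms unfolding is_circuit_def by blast
  define p where "p = length es"
  define g where "g k = es ! (k mod p)" for k
  have p0: "p > 0" using es(1) p_def by simp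
  have dist: "distinct es" using es(3) by (simp add: distinct_map)
  have inj: "inj_on g {..<p}"
    using dist unfolding g_def p_def by (auto simp: inj_on_def nth_eq_iff_index_eq)
  have img: "g ` {..<p} = C"
    unfolding g_def p_def es(2)[symmetric] by (auto simp: set_conv_nth)
  have both: "\<forall>e. \<not> ((e,True) \<in> C \<and> (e,False) \<in> C)"
  proof (intro allI notI)
    fix e assume "(e,True) \<in> C \<and> (e,False) \<in> C"
    then obtain i j where "i < length es" "j < length es" "es!i = (e,True)" "es!j = (e,False)"
      using es(2) by (auto simp: in_set_conv_nth)
    moreover have "i \<noteq> j" using calculation by auto
    ultimately show False using es(3) unfolding distinct_conv_nth by (metis fst_conv length_map nth_map)
  qed
  have "(\<Sum>k<p. uc (g k)) \<in> flows src tgt"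
  proof (rule closed_walk_flow)
    show "\<forall>k<p. ohead src tgt (g k) = otail src tgt (g (Suc k))"
      using es(4) unfolding g_def p_def by simp
    show "g p = g 0" unfolding g_def by simp
  qed
  moreover have "(\<Sum>k<p. uc (g k)) = circuit_chain C"
    using chain_eq[OF inj] both img by simp
  ultimately show ?thesis by simp
qed

definition l1 :: "real^'e::finite \<Rightarrow> real" where
  "l1 x = (\<Sum>e\<in>UNIV. \<bar>x$e\<bar>)"

lemma l1_nonneg: "l1 x \<ge> 0"
  unfolding l1_def by (simp add: sum_nonneg)

lemma qf_sum: "qf x = (\<Sum>e\<in>UNIV. x$e * x$e)"
  unfolding qf_def inner_vec_def by simp

lemma int_ge1: "(x::real) \<in> \<int> \<Longrightarrow> x > 0 \<Longrightarrow> x \<ge> 1"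
proof -
  assume "x \<in> \<int>" "x > 0"
  then obtain n where n: "x = of_int n" by (auto elim: Ints_cases)
  with \<open>x > 0\<close> have "n \<ge> 1" by simp
  with n show ?thesis by simp
qed

lemma int_lem1: "(x::real) \<in> \<int> \<Longrightarrow> x < 0 \<Longrightarrow> x \<le> -1"
  using int_ge1[of "-x"] by (simp add: Ints_minus)

lemma int_flows_diff:
  "x \<in> int_flows src tgt \<Longrightarrow> y \<in> int_flows src tgt \<Longrightarrow> x - y \<in> int_flows src tgt"
  unfolding int_flows_def flows_iff by (auto simp: dv_diff Ints_diff)

lemma dv_add: "dv src tgt (x + y) v = dv src tgt x v + dv src tgt y v"
  unfolding dv_def by (simp add: distrib_left sum.distrib)

lemma int_flows_add:
  "x \<in> int_flows src tgt \<Longrightarrow> y \<in> int_flows src tgt \<Longrightarrow> x + y \<in> int_flows src tgt"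
  unfolding int_flows_def flows_iff by (auto simp: dv_add Ints_add)

lemma conformal:
  fixes nu :: "real^'e::finite" and src tgt :: "'e \<Rightarrow> 'v"
  assumes nu: "nu \<in> int_flows src tgt" and nz: "nu \<noteq> 0"
  shows "\<exists>gam \<in> int_flows src tgt. qf gam \<ge> 1 \<and> qf gam + l1 (nu - gam) = l1 nu"
proof -
  define A where "A = {oe. oval nu oe > 0}"
  have flow: "\<And>v. (\<Sum>oe\<in>{oe. otail src tgt oe = v}. oval nu oe) = 0"
    using nu unfolding int_flows_def flows_def by auto
  have step: "\<exists>b. b \<in> A \<and> otail src tgt b = ohead src tgt a" if aA: "a \<in> A" for a
  proof (rule ccontr)
    assume "\<not> ?thesis"
    hence le: "\<And>b. otail src tgt b = ohead src tgt a \<Longrightarrow> oval nu b \<le> 0"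
      unfolding A_def by (metis mem_Collect_eq not_less)
    define S where "S = {oe. otail src tgt oe = ohead src tgt a}"
    have rS: "orev a \<in> S" unfolding S_def orev_def otail_def ohead_def by auto
    have rneg: "oval nu (orev a) < 0" using aA unfolding A_def oval_def orev_def by auto
    have "(\<Sum>oe\<in>S. oval nu oe) = oval nu (orev a) + (\<Sum>oe\<in>S - {orev a}. oval nu oe)"
      using rS by (simp add: sum.remove)
    also have "\<dots> < 0" using rneg le unfolding S_def
      by (smt (verit) DiffD1 mem_Collect_eq sum_nonpos)
    finally show False using flow unfolding S_def by simp
  qed
  obtain e0 where e0: "nu $ e0 \<noteq> 0" using nz by (auto simp: vec_eq_iff)
  define a0 where "a0 = (e0, nu $ e0 > 0)"
  have a0A: "a0 \<in> A" using e0 unfolding A_def a0_def oval_def by auto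
  define nxt where "nxt a = (SOME b. b \<in> A \<and> otail src tgt b = ohead src tgt a)" for a
  have nxt: "nxt a \<in> A \<and> otail src tgt (nxt a) = ohead src tgt a" if "a \<in> A" for a
    unfolding nxt_def using someI_ex[OF step[OF that]] .
  define f where "f n = (nxt ^^ n) a0" for n
  have fA: "f n \<in> A" for n by (induction n) (auto simp: f_def a0A nxt)
  have fstep: "ohead src tgt (f n) = otail src tgt (f (Suc n))" for n
    using nxt[OF fA[of n]] by (simp add: f_def)
  have "\<not> inj f"
  proof
    assume "inj f"
    moreover have "finite (range f)" by simp
    ultimately have "finite (UNIV::nat set)" using finite_imageD by blast
    thus False by simp
  qed
  then obtain i j where "i \<noteq> j" "f i = f j" unfolding inj_def by blast
  hence ex: "\<exists>j. \<exists>i<j. f i = f j" by (metis linorder_neqE_nat)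
  define j0 where "j0 = (LEAST j. \<exists>i<j. f i = f j)"
  obtain i0 where i0: "i0 < j0" "f i0 = f j0"
    using LeastI_ex[OF ex] unfolding j0_def by blast
  have injf: "inj_on f {..<j0}"
  proof (rule inj_onI)
    fix a b assume ab: "a \<in> {..<j0}" "b \<in> {..<j0}" "f a = f b"
    show "a = b"
    proof (rule ccontr)
      assume "a \<noteq> b"
      then consider "a < b" | "b < a" by linarith
      thus False
      proof cases
        case 1 thus False using ab not_less_Least[of b "\<lambda>j. \<exists>i<j. f i = f j"] unfolding j0_def by auto
      next
        case 2 thus False using ab not_less_Least[of a "\<lambda>j. \<exists>i<j. f i = f j"] unfolding j0_def by auto
      qed
    qed
  qed
  define p where "p = j0 - i0"
  define g where "g k = f (i0 + k)" for k
  have injg: "inj_on g {..<p}"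
  proof (rule inj_onI)
    fix a b assume "a \<in> {..<p}" "b \<in> {..<p}" "g a = g b"
    hence "i0 + a \<in> {..<j0}" "i0 + b \<in> {..<j0}" "f (i0 + a) = f (i0 + b)"
      unfolding g_def p_def by auto
    thus "a = b" using inj_onD[OF injf] by fastforce
  qed
  have gp: "g p = g 0" using i0 unfolding g_def p_def by simp
  have gstep: "\<forall>k<p. ohead src tgt (g k) = otail src tgt (g (Suc k))"
    using fstep unfolding g_def by simp
  define W where "W = g ` {..<p}"
  have WA: "W \<subseteq> A" unfolding W_def g_def using fA by auto
  have both: "\<forall>e. \<not> ((e,True) \<in> W \<and> (e,False) \<in> W)"
  proof (intro allI notI)
    fix e assume "(e,True) \<in> W \<and> (e,False) \<in> W"
    hence "(e,True) \<in> A" "(e,False) \<in> A" using WA by auto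
    thus False unfolding A_def oval_def by auto
  qed
  define gam where "gam = circuit_chain W"
  have geq: "(\<Sum>k<p. uc (g k)) = gam"
    unfolding gam_def W_def using chain_eq[OF injg] both W_def by simp
  have gflow: "gam \<in> flows src tgt"
    using closed_walk_flow[OF gstep gp] geq by simp
  have gint: "gam \<in> int_flows src tgt"
    using gflow unfolding int_flows_def gam_def circuit_chain_def by auto
  have per: "gam$e * gam$e + \<bar>nu$e - gam$e\<bar> = \<bar>nu$e\<bar>" for e
  proof -
    have ie: "nu $ e \<in> \<int>" using nu unfolding int_flows_def by auto
    consider "(e,True) \<in> W" | "(e,True) \<notin> W" "(e,False) \<in> W" | "(e,True) \<notin> W" "(e,False) \<notin> W" by blast
    thus ?thesis
    proof cases
      case 1
      hence "nu $ e > 0" using WA unfolding A_def oval_def by auto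
      hence "nu $ e \<ge> 1" using int_ge1 ie by blast
      moreover have "gam $ e = 1" using 1 unfolding gam_def circuit_chain_def by simp
      ultimately show ?thesis by simp
    next
      case 2
      hence "nu $ e < 0" using WA unfolding A_def oval_def by auto
      hence "nu $ e \<le> -1" using int_lem1 ie by blast
      moreover have "gam $ e = -1" using 2 unfolding gam_def circuit_chain_def by simp
      ultimately show ?thesis by simp
    next
      case 3
      hence "gam $ e = 0" unfolding gam_def circuit_chain_def by simp
      thus ?thesis by simp
    qed
  qed
  have "qf gam + l1 (nu - gam) = (\<Sum>e\<in>UNIV. gam$e * gam$e + \<bar>nu$e - gam$e\<bar>)"
    unfolding qf_sum l1_def by (simp add: sum.distrib)
  also have "\<dots> = l1 nu" unfolding l1_def using per by simp
  finally have eq: "qf gam + l1 (nu - gam) = l1 nu" .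
  define e1 where "e1 = fst (g 0)"
  have "p > 0" using i0 unfolding p_def by simp
  hence g0W: "g 0 \<in> W" unfolding W_def by auto
  have "gam $ e1 * gam $ e1 = 1"
  proof (cases "snd (g 0)")
    case True
    hence "(e1, True) \<in> W" using g0W unfolding e1_def by (metis prod.collapse)
    thus ?thesis unfolding gam_def circuit_chain_def by simp
  next
    case False
    hence "(e1, False) \<in> W" using g0W unfolding e1_def by (metis prod.collapse)
    moreover have "(e1, True) \<notin> W" using both calculation by blast
    ultimately show ?thesis unfolding gam_def circuit_chain_def by simp
  qed
  moreover have "gam $ e1 * gam $ e1 \<le> qf gam"
    unfolding qf_sum by (rule member_le_sum) auto
  ultimately have "qf gam \<ge> 1" by simp
  thus ?thesis using gint eq by blast
qed

lemma vor_ineq: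
  assumes "x \<in> voronoi_cell src tgt" "g \<in> int_flows src tgt"
  shows "2 * (x \<bullet> g) \<le> qf g"
proof -
  have "qf x \<le> qf (x - g)" using assms unfolding voronoi_cell_def by auto
  thus ?thesis unfolding qf_def by (simp add: inner_diff_left inner_diff_right inner_commute)
qed

lemma vor_l1:
  assumes x: "x \<in> voronoi_cell src tgt"
  shows "nu \<in> int_flows src tgt \<Longrightarrow> 2 * (x \<bullet> nu) \<le> l1 nu"
proof -
  have "\<forall>nu. nu \<in> int_flows src tgt \<longrightarrow> l1 nu \<le> real n \<longrightarrow> 2 * (x \<bullet> nu) \<le> l1 nu" for n
  proof (induction n)
    case 0
    show ?case
    proof (intro allI impI)
      fix nu assume nu: "nu \<in> int_flows src tgt" "l1 nu \<le> real 0"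
      show "2 * (x \<bullet> nu) \<le> l1 nu"
      proof (cases "nu = 0")
        case True thus ?thesis by (simp add: l1_nonneg)
      next
        case False
        then obtain gam where "qf gam \<ge> 1" "qf gam + l1 (nu - gam) = l1 nu"
          using conformal[OF nu(1)] by blast
        thus ?thesis using nu(2) l1_nonneg[of "nu - gam"] by simp
      qed
    qed
  next
    case (Suc n)
    show ?case
    proof (intro allI impI)
      fix nu assume nu: "nu \<in> int_flows src tgt" "l1 nu \<le> real (Suc n)"
      show "2 * (x \<bullet> nu) \<le> l1 nu"
      proof (cases "nu = 0")
        case True thus ?thesis by (simp add: l1_nonneg)
      next
        case False
        then obtain gam where g: "gam \<in> int_flows src tgt" "qf gam \<ge> 1" "qf gam + l1 (nu - gam) = l1 nu"
          using conformal[OF nu(1)] by blast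
        have d: "nu - gam \<in> int_flows src tgt" using int_flows_diff[OF nu(1) g(1)] .
        have "l1 (nu - gam) \<le> real n" using g nu(2) by simp
        hence "2 * (x \<bullet> (nu - gam)) \<le> l1 (nu - gam)" using Suc.IH d by blast
        moreover have "2 * (x \<bullet> gam) \<le> qf gam" using vor_ineq[OF x g(1)] .
        ultimately show ?thesis using g(3) by (simp add: inner_diff_right)
      qed
    qed
  qed
  moreover assume "nu \<in> int_flows src tgt"
  moreover obtain n where "l1 nu \<le> real n" using real_arch_simple by blast
  ultimately show ?thesis by blast
qed

lemma circuit_int:
  assumes "lam \<in> Xi1 src tgt"
  shows "lam \<in> int_flows src tgt" "qf lam = l1 lam"
proof -
  obtain C where C: "is_circuit src tgt C" "lam = circuit_chain C"
    using assms unfolding Xi1_def by blast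
  show "lam \<in> int_flows src tgt"
    using circuit_flow[OF C(1)] C(2) unfolding int_flows_def circuit_chain_def by auto
  show "qf lam = l1 lam"
    unfolding qf_sum l1_def C(2) by (intro sum.cong) (auto simp: circuit_chain_def)
qed

theorem mainTheorem5:
  fixes src tgt :: "'e::finite \<Rightarrow> 'v::finite"
    and F :: "(real ^ 'e) set" and lam mu :: "real ^ 'e"
  assumes "connected_graph src tgt"
    and "F face_of voronoi_cell src tgt"
    and "F \<noteq> {}"
    and "lam \<in> Xi1 src tgt" and "mu \<in> Xi1 src tgt" and "lam \<noteq> mu"
    and "F \<subseteq> hyperplane_H src tgt lam \<inter> hyperplane_H src tgt mu"
  shows "\<not> (\<exists>oe. oe \<in> supp lam \<and> orev oe \<in> supp mu)"
proof
  assume "\<exists>oe. oe \<in> supp lam \<and> orev oe \<in> supp mu"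
  then obtain oe where oe: "oval lam oe > 0" "oval mu (orev oe) > 0"
    unfolding supp_def by auto
  obtain x where xF: "x \<in> F" using assms(3) by blast
  have xV: "x \<in> voronoi_cell src tgt" using face_of_imp_subset[OF assms(2)] xF by blast
  have h: "2 * (x \<bullet> lam) = qf lam" "2 * (x \<bullet> mu) = qf mu"
    using assms(7) xF unfolding hyperplane_H_def by auto
  have s: "lam + mu \<in> int_flows src tgt"
    using int_flows_add circuit_int(1)[OF assms(4)] circuit_int(1)[OF assms(5)] by blast
  have "2 * (x \<bullet> (lam + mu)) \<le> l1 (lam + mu)" using vor_l1[OF xV s] .
  hence le: "l1 lam + l1 mu \<le> l1 (lam + mu)"
    using h circuit_int(2)[OF assms(4)] circuit_int(2)[OF assms(5)] by (simp add: inner_add_right)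
  have "l1 (lam + mu) < l1 lam + l1 mu"
    unfolding l1_def sum.distrib[symmetric]
  proof (rule sum_strict_mono_ex1)
    show "\<forall>e\<in>UNIV. \<bar>(lam + mu) $ e\<bar> \<le> \<bar>lam $ e\<bar> + \<bar>mu $ e\<bar>" by (simp add: abs_triangle_ineq)
    show "\<exists>e\<in>UNIV. \<bar>(lam + mu) $ e\<bar> < \<bar>lam $ e\<bar> + \<bar>mu $ e\<bar>"
      using oe by (intro bexI[of _ "fst oe"]) (auto simp: oval_def orev_def split: if_splits)
  qed auto
  with le show False by simp
qed

end
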